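(* In the depth-3 instance described below, let $s_e$ denote the probability that the edge $e$ belongs to the set $A$ produced by the shadow distribution. Then for every edge $e\in E$, $x_e\le s_e\le 6x_e$.
   Context: Depth-3 instance: fix a small constant $\rho>0$ and a large integer $m$ with $\rho m\in\mathbb N$, ground set $[m]$. Layers: $L_0=\{s\}$ ($S_s=\emptyset$); $L_1$ has one vertex $u$ for each $S_u\subseteq[m]$ with $|S_u|=\rho m$; $L_2$ one vertex for each subset of size $2\rho m$; $L_3$ (the sinks) one vertex for each subset of size $\rho m$. Edges: $s$ to every vertex of $L_1$; $(u,v)$ with $u\in L_1,v\in L_2$ iff $S_u\subseteq S_v$; $(u,v)$ with $u\in L_2,v\in L_3$ iff $S_v\subseteq S_u$. For an edge $e=(u,v)$ write $S_e=S_v$, and say $e\in L_i$ if $v\in L_i$. $D(e)$ denotes the set of edges $(a,b)$ such that $a$ is reachable by a directed path (possibly of length 0) from the endpoint of $e$. Assignment solution: $x_e=\binom{(1-\rho)m}{\rho m}^{-1}$ for $e\in L_1$, $x_e=\binom{(1-\rho)m}{\rho m}^{-1}\binom{2\rho m}{\rho m}^{-1}$ for $e\in L_2$, $x_e=\binom{(1-\rho)m}{\rho m}^{-1}$ for $e\in L_3$. Subtree solutions $x^{(e)}$: for $e\in L_1$, $x^{(e)}_{e'}=1$ if $e'=e$; $\binom{2\rho m}{\rho m}^{-1}$ if $e'\in L_2\cap D(e)$; $\frac{\binom{(1-\rho)m}{\rho m}}{\binom{m}{\rho m}}\binom{m-2\rho m+|S_{e'}\cap S_e|}{|S_{e'}\cap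 S_e|}^{-1}$ if $e'\in L_3\cap D(e)$; $0$ otherwise. For $e\in L_2$, $x^{(e)}_{e'}=1$ if $e'=e$ or $e'\in L_3\cap D(e)$, else $0$. For $e\in L_3$, $x^{(e)}_{e'}=1$ iff $e'=e$, else $0$. Shadow distribution: choose a random set $S$ containing each edge $e$ independently with probability $x_e$; for each $e\in S$ independently draw a set $S_e$ containing each edge $e'$ independently with probability $x^{(e)}_{e'}$; output $A=\bigcup_{e\in S}S_e$. *)

theory Defs
  imports "HOL-Probability.Probability"
begin

text \<open>Depth-3 instance. The parameter k stands for rho*m. Vertices are pairs
(layer, set); the source is (0, {}). The ground set [m] is {1..m}.\<close>

type_synonym vtx = "nat \<times> nat set"
type_synonym edg = "vtx \<times> vtx"

definition edges3 :: "nat \<Rightarrow> nat \<Rightarrow> edg set" where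
  "edges3 m k =
     {((0, {}), (1, S)) | S. S \<subseteq> {1..m} \<and> card S = k}
   \<union> {((1, S), (2, T)) | S T. S \<subseteq> {1..m} \<and> card S = k \<and> T \<subseteq> {1..m} \<and> card T = 2 * k \<and> S \<subseteq> T}
   \<union> {((2, T), (3, U)) | T U. T \<subseteq> {1..m} \<and> card T = 2 * k \<and> U \<subseteq> {1..m} \<and> card U = k \<and> U \<subseteq> T}"

definition elayer :: "edg \<Rightarrow> nat" where "elayer e = fst (snd e)"
definition eset :: "edg \<Rightarrow> nat set" where "eset e = snd (snd e)"

definition desc :: "nat \<Rightarrow> nat \<Rightarrow> edg \<Rightarrow> edg set" where
  "desc m k e = {f \<in> edges3 m k. (snd e, fst f) \<in> (edges3 m k)\<^sup>*}"

definition xsol :: "nat \<Rightarrow> nat \<Rightarrow> edg \<Rightarrow> real" where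
  "xsol m k e =
     (if elayer e = 2 then 1 / (real ((m - k) choose k) * real ((2 * k) choose k))
      else 1 / real ((m - k) choose k))"

definition xsub :: "nat \<Rightarrow> nat \<Rightarrow> edg \<Rightarrow> edg \<Rightarrow> real" where
  "xsub m k e e' =
     (if e' = e then 1
      else if e' \<in> desc m k e then
        (if elayer e = 1 then
           (if elayer e' = 2 then 1 / real ((2 * k) choose k)
            else if elayer e' = 3 then
              (real ((m - k) choose k) / real (m choose k)) /
                real ((m - 2 * k + card (eset e' \<inter> eset e)) choose card (eset e' \<inter> eset e))
            else 0)
         else if elayer e = 2 then (if elayer e' = 3 then 1 else 0)
         else 0)
      else 0)"

definition rand_subset :: "edg set \<Rightarrow> (edg \<Rightarrow> real) \<Rightarrow> edg set pmf" where
  "rand_subset E p = map_pmf (\<lambda>b. {e \<in> E. b e}) (Pi_pmf E False (\<lambda>e. bernoulli_pmf (p e)))"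

definition shadow :: "nat \<Rightarrow> nat \<Rightarrow> edg set pmf" where
  "shadow m k =
     bind_pmf (rand_subset (edges3 m k) (xsol m k)) (\<lambda>S.
     bind_pmf (Pi_pmf S {} (\<lambda>f. rand_subset (edges3 m k) (xsub m k f))) (\<lambda>T.
     return_pmf (\<Union>f\<in>S. T f)))"

definition sprob :: "nat \<Rightarrow> nat \<Rightarrow> edg \<Rightarrow> real" where
  "sprob m k e = measure_pmf.prob (shadow m k) {A. e \<in> A}"

end

theory Submission
  imports Defs
begin


lemma rs_prob:
  assumes "finite E" "0 \<le> p e" "p e \<le> 1"
  shows "measure_pmf.prob (rand_subset E p) {X. e \<notin> X} = 1 - (if e \<in> E then p e else 0)"
proof (cases "e \<in> E")
  case True
  have "(\<lambda>b. {e \<in> E. b e}) -` {X. e \<notin> X} = (\<lambda>b. b e) -` {False}"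
    using True by auto
  hence "measure_pmf.prob (rand_subset E p) {X. e \<notin> X} =
     measure_pmf.prob (map_pmf (\<lambda>b. b e) (Pi_pmf E False (\<lambda>e. bernoulli_pmf (p e)))) {False}"
    unfolding rand_subset_def by simp
  also have "\<dots> = 1 - p e"
    using True assms by (simp add: Pi_pmf_component measure_pmf_single)
  finally show ?thesis using True by simp
next
  case False
  have "(\<lambda>b. {e \<in> E. b e}) -` {X. e \<notin> X} = UNIV"
    using False by auto
  thus ?thesis unfolding rand_subset_def using False by simp
qed

lemma shadow_compl:
  assumes fin: "finite E" and x01: "\<And>f. 0 \<le> x f \<and> x f \<le> 1"
    and y01: "\<And>f e'. 0 \<le> y f e' \<and> y f e' \<le> 1"
  shows "measure_pmf.prob (bind_pmf (rand_subset E x) (\<lambda>S.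
     bind_pmf (Pi_pmf S {} (\<lambda>f. rand_subset E (y f))) (\<lambda>T.
     return_pmf (\<Union>f\<in>S. T f)))) {A. e \<notin> A}
   = (\<Prod>f\<in>E. 1 - x f * (if e \<in> E then y f e else 0))"
proof -
  define r where "r f = (if e \<in> E then y f e else 0)" for f
  define B where "B = Pi_pmf E False (\<lambda>e. bernoulli_pmf (x e))"
  define K where "K S = bind_pmf (Pi_pmf S {} (\<lambda>f. rand_subset E (y f))) (\<lambda>T.
     return_pmf (\<Union>f\<in>S. T f))" for S
  have inner: "measure_pmf.prob (K S) {A. e \<notin> A} = (\<Prod>f\<in>S. 1 - r f)" if "finite S" for S
  proof -
    have "K S = map_pmf (\<lambda>T. \<Union>f\<in>S. T f) (Pi_pmf S {} (\<lambda>f. rand_subset E (y f)))"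
      unfolding K_def map_pmf_def by simp
    moreover have "(\<lambda>T. \<Union>f\<in>S. T f) -` {A. e \<notin> A} = Pi S (\<lambda>_. {X. e \<notin> X})"
      by auto
    ultimately have "measure_pmf.prob (K S) {A. e \<notin> A} =
       measure_pmf.prob (Pi_pmf S {} (\<lambda>f. rand_subset E (y f))) (Pi S (\<lambda>_. {X. e \<notin> X}))"
      by (simp only: measure_map_pmf)
    also have "\<dots> = (\<Prod>f\<in>S. measure_pmf.prob (rand_subset E (y f)) {X. e \<notin> X})"
      using that by (rule measure_Pi_pmf_Pi)
    also have "\<dots> = (\<Prod>f\<in>S. 1 - r f)"
      using rs_prob[OF fin] y01 by (simp add: r_def)
    finally show ?thesis .
  qed
  have "measure_pmf.prob (bind_pmf (rand_subset E x) K) {A. e \<notin> A}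
      = measure_pmf.prob (bind_pmf B (\<lambda>b. K {f \<in> E. b f})) {A. e \<notin> A}"
    unfolding rand_subset_def B_def by (simp add: bind_map_pmf)
  also have "\<dots> = pmf (map_pmf (\<lambda>A. e \<in> A) (bind_pmf B (\<lambda>b. K {f \<in> E. b f}))) False"
    by (simp add: pmf_map vimage_def)
  also have "\<dots> = measure_pmf.expectation B (\<lambda>b. pmf (map_pmf (\<lambda>A. e \<in> A) (K {f \<in> E. b f})) False)"
    by (simp add: map_bind_pmf pmf_bind)
  also have "\<dots> = measure_pmf.expectation B (\<lambda>b. \<Prod>f\<in>E. (if b f then 1 - r f else 1))"
  proof (rule Bochner_Integration.integral_cong[OF refl])
    fix b
    have "pmf (map_pmf (\<lambda>A. e \<in> A) (K {f \<in> E. b f})) False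
        = measure_pmf.prob (K {f \<in> E. b f}) {A. e \<notin> A}"
      by (simp add: pmf_map vimage_def)
    also have "\<dots> = (\<Prod>f\<in>{f \<in> E. b f}. 1 - r f)" using inner fin by simp
    also have "\<dots> = (\<Prod>f\<in>E. (if b f then 1 - r f else 1))"
      using fin by (simp add: prod.inter_filter)
    finally show "pmf (map_pmf (\<lambda>A. e \<in> A) (K {f \<in> E. b f})) False = (\<Prod>f\<in>E. (if b f then 1 - r f else 1))" .
  qed
  also have "\<dots> = (\<Prod>f\<in>E. measure_pmf.expectation (bernoulli_pmf (x f)) (\<lambda>v. if v then 1 - r f else 1))"
    unfolding B_def
    by (rule expectation_prod_Pi_pmf[OF fin, where f = "\<lambda>f v. if v then 1 - r f else 1"])
       (auto intro: integrable_measure_pmf_finite simp: r_def y01)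
  also have "\<dots> = (\<Prod>f\<in>E. 1 - x f * r f)"
    using x01 by (intro prod.cong refl) (simp add: algebra_simps)
  finally show ?thesis unfolding K_def r_def .
qed



lemma choose_mono_top: "a \<le> b \<Longrightarrow> a choose k \<le> b choose k"
  unfolding binomial_def by (intro card_mono) auto

lemma choose_ident:
  assumes "j \<le> k"
  shows "(n+j choose j) * (n+k choose (k-j)) = (n+k choose k) * (k choose j)"
proof -
  have "(n+k choose k) * (k choose j) = (n+k choose j) * ((n+k-j) choose (k-j))"
    using assms by (intro choose_mult) auto
  moreover have "(n+k choose (n+j)) * (n+j choose j) = (n+k choose j) * ((n+k-j) choose (n+j-j))"
    using assms by (intro choose_mult) auto
  moreover have "n+k choose (k-j) = n+k choose (n+j)"
    using assms binomial_symmetric[of "k-j" "n+k"] by (simp add: algebra_simps)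
  moreover have "(n+k-j) choose (k-j) = (n+k-j) choose n"
    using assms binomial_symmetric[of "k-j" "n+k-j"] by simp
  ultimately show ?thesis by (simp add: algebra_simps)
qed

lemma choose_sum_real:
  "(\<Sum>j\<le>k. real (k choose j) * real (k choose (k-j)) / real (n+j choose j))
     = real (n+2*k choose k) / real (n+k choose k)"
proof -
  have pos: "real (n+k choose k) > 0" by simp
  have "(\<Sum>j\<le>k. real (k choose j) * real (k choose (k-j)) / real (n+j choose j))
      = (\<Sum>j\<le>k. real (k choose j) * real (n+k choose (k-j)) / real (n+k choose k))"
  proof (intro sum.cong refl)
    fix j assume "j \<in> {..k}"
    hence jk: "j \<le> k" by simp
    have e1: "k choose (k-j) = k choose j" using binomial_symmetric[OF jk] by simp
    have e2: "real (n+j choose j) * real (n+k choose (k-j)) = real (n+k choose k) * real (k choose j)"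
      using choose_ident[OF jk, of n] by (metis of_nat_mult)
    have p2: "real (n+j choose j) > 0" by simp
    show "real (k choose j) * real (k choose (k-j)) / real (n+j choose j)
        = real (k choose j) * real (n+k choose (k-j)) / real (n+k choose k)"
      using e2 pos p2 unfolding e1 by (simp add: field_simps)
  qed
  also have "\<dots> = real (\<Sum>j\<le>k. (k choose j) * (n+k choose (k-j))) / real (n+k choose k)"
    by (simp add: sum_divide_distrib)
  also have "(\<Sum>j\<le>k. (k choose j) * (n+k choose (k-j))) = n+2*k choose k"
  proof -
    have "k + (n + k) = n + 2*k" by simp
    thus ?thesis using vandermonde[of k "n+k" k] by metis
  qed
  finally show ?thesis .
qed

lemma count_split:
  fixes g :: "nat \<Rightarrow> real"
  assumes fU: "finite U" and fW: "finite W" and dis: "U \<inter> W = {}"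
  shows "(\<Sum>S\<in>{S. S \<subseteq> U \<union> W \<and> card S = k}. g (card (U \<inter> S)))
       = (\<Sum>j\<le>k. real (card U choose j) * real (card W choose (k-j)) * g j)"
proof -
  let ?A = "{S. S \<subseteq> U \<union> W \<and> card S = k}"
  have finA: "finite ?A" using fU fW by (auto intro: finite_subset[of _ "Pow (U \<union> W)"])
  have img: "(\<lambda>S. card (U \<inter> S)) ` ?A \<subseteq> {..k}"
  proof
    fix y assume "y \<in> (\<lambda>S. card (U \<inter> S)) ` ?A"
    then obtain S where S: "S \<subseteq> U \<union> W" "card S = k" "y = card (U \<inter> S)" by auto
    have "finite S" using S fU fW finite_subset by blast
    hence "card (U \<inter> S) \<le> card S" by (intro card_mono) auto
    thus "y \<in> {..k}" using S by simp
  qed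
  have "(\<Sum>S\<in>?A. g (card (U \<inter> S))) =
     (\<Sum>j\<le>k. \<Sum>S\<in>{S \<in> ?A. card (U \<inter> S) = j}. g (card (U \<inter> S)))"
    using sum.group[OF finA _ img, of "\<lambda>S. g (card (U \<inter> S))"] by simp
  also have "\<dots> = (\<Sum>j\<le>k. real (card U choose j) * real (card W choose (k-j)) * g j)"
  proof (intro sum.cong refl)
    fix j assume "j \<in> {..k}"
    hence jk: "j \<le> k" by simp
    let ?P = "{S \<in> ?A. card (U \<inter> S) = j}"
    have bij: "bij_betw (\<lambda>(X,Y). X \<union> Y) ({X. X \<subseteq> U \<and> card X = j} \<times> {Y. Y \<subseteq> W \<and> card Y = k - j}) ?P"
    proof (rule bij_betwI[where g = "\<lambda>S. (U \<inter> S, W \<inter> S)"])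
      show "(\<lambda>(X,Y). X \<union> Y) \<in> {X. X \<subseteq> U \<and> card X = j} \<times> {Y. Y \<subseteq> W \<and> card Y = k - j} \<rightarrow> ?P"
      proof
        fix p assume "p \<in> {X. X \<subseteq> U \<and> card X = j} \<times> {Y. Y \<subseteq> W \<and> card Y = k - j}"
        then obtain X Y where p: "p = (X,Y)" "X \<subseteq> U" "card X = j" "Y \<subseteq> W" "card Y = k - j" by auto
        have fX: "finite X" "finite Y" using p fU fW finite_subset by auto
        have dXY: "X \<inter> Y = {}" using p dis by auto
        have "card (X \<union> Y) = k" using card_Un_disjoint[OF fX dXY] p jk by simp
        moreover have "U \<inter> (X \<union> Y) = X" using p dis by auto
        ultimately show "(\<lambda>(X,Y). X \<union> Y) p \<in> ?P" using p by auto
      qed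
      show "(\<lambda>S. (U \<inter> S, W \<inter> S)) \<in> ?P \<rightarrow> {X. X \<subseteq> U \<and> card X = j} \<times> {Y. Y \<subseteq> W \<and> card Y = k - j}"
      proof
        fix S assume S: "S \<in> ?P"
        have fS: "finite (U \<inter> S)" "finite (W \<inter> S)" using fU fW by auto
        have dd: "(U \<inter> S) \<inter> (W \<inter> S) = {}" using dis by auto
        have "S = (U \<inter> S) \<union> (W \<inter> S)" using S by auto
        hence "card S = card (U \<inter> S) + card (W \<inter> S)"
          using card_Un_disjoint[OF fS dd] by simp
        thus "(U \<inter> S, W \<inter> S) \<in> {X. X \<subseteq> U \<and> card X = j} \<times> {Y. Y \<subseteq> W \<and> card Y = k - j}"
          using S by auto
      qed
      show "\<And>p. p \<in> {X. X \<subseteq> U \<and> card X = j} \<times> {Y. Y \<subseteq> W \<and> card Y = k - j} \<Longrightarrow>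
          (U \<inter> (case p of (X, Y) \<Rightarrow> X \<union> Y), W \<inter> (case p of (X, Y) \<Rightarrow> X \<union> Y)) = p"
        using dis by auto
      show "\<And>S. S \<in> ?P \<Longrightarrow> (case (U \<inter> S, W \<inter> S) of (X, Y) \<Rightarrow> X \<union> Y) = S"
        by auto
    qed
    have "card ?P = card ({X. X \<subseteq> U \<and> card X = j} \<times> {Y. Y \<subseteq> W \<and> card Y = k - j})"
      using bij_betw_same_card[OF bij] by simp
    also have "\<dots> = (card U choose j) * (card W choose (k-j))"
      using n_subsets[OF fU] n_subsets[OF fW] by (simp add: card_cartesian_product)
    finally have cP: "card ?P = (card U choose j) * (card W choose (k-j))" .
    have "(\<Sum>S\<in>?P. g (card (U \<inter> S))) = (\<Sum>S\<in>?P. g j)" by simp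
    also have "\<dots> = real (card ?P) * g j" by simp
    finally show "(\<Sum>S\<in>?P. g (card (U \<inter> S))) = real (card U choose j) * real (card W choose (k-j)) * g j"
      using cP by simp
  qed
  finally show ?thesis .
qed

lemma reach:
  assumes "(u, v) \<in> (edges3 m k)\<^sup>*"
  shows "u = v \<or> (fst u < fst v \<and> (fst u = 1 \<longrightarrow> fst v = 2 \<longrightarrow> snd u \<subseteq> snd v))"
  using assms
proof (induction rule: rtrancl_induct)
  case base thus ?case by simp
next
  case (step w v)
  have e: "fst v = Suc (fst w) \<and> (fst w = 1 \<longrightarrow> snd w \<subseteq> snd v)"
    using step.hyps(2) unfolding edges3_def by auto
  from step.IH show ?case
  proof
    assume "u = w" thus ?case using e by auto
  next
    assume "fst u < fst w \<and> (fst u = 1 \<longrightarrow> fst w = 2 \<longrightarrow> snd u \<subseteq> snd w)"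
    thus ?case using e by auto
  qed
qed



lemma finite_edges3: "finite (edges3 m k)"
proof -
  have "edges3 m k \<subseteq> ({0,1,2} \<times> Pow {1..m}) \<times> ({1,2,3} \<times> Pow {1..m})"
    unfolding edges3_def by auto
  thus ?thesis by (rule finite_subset) auto
qed

lemma inv_nat01: "0 \<le> 1 / real (n::nat) \<and> 1 / real n \<le> (1::real)"
  by (cases n) (auto simp: field_simps)

lemma xsol01: "0 \<le> xsol m k f \<and> xsol m k f \<le> 1"
  unfolding xsol_def using inv_nat01[of "(m - k choose k) * (2*k choose k)"] inv_nat01[of "m - k choose k"]
  by auto

lemma xsub01: "0 \<le> xsub m k f e \<and> xsub m k f e \<le> 1"
proof -
  have le: "real (m - k choose k) \<le> real (m choose k)" using choose_mono_top[of "m-k" m k] by simp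
  have q: "0 \<le> real (m - k choose k) / real (m choose k) \<and> real (m - k choose k) / real (m choose k) \<le> 1"
    using le by (cases "real (m choose k) = 0") (simp_all add: divide_le_eq_1)
  have "0 \<le> q / real (n::nat) \<and> q / real n \<le> 1" if "0 \<le> q \<and> q \<le> 1" for q n
    using that by (cases n) (auto simp: field_simps)
  note this[OF q]
  thus ?thesis unfolding xsub_def using inv_nat01[of "2*k choose k"] by auto
qed

lemma one_minus_prod_le:
  fixes c :: "'a \<Rightarrow> real"
  assumes "finite A" "\<And>x. 0 \<le> c x \<and> c x \<le> 1"
  shows "1 - (\<Prod>x\<in>A. 1 - c x) \<le> (\<Sum>x\<in>A. c x) \<and> 0 \<le> (\<Prod>x\<in>A. 1 - c x) \<and> (\<Prod>x\<in>A. 1 - c x) \<le> 1"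
  using assms(1)
proof (induction rule: finite_induct)
  case empty thus ?case by simp
next
  case (insert x F)
  have cx: "0 \<le> c x" "c x \<le> 1" using assms(2) by auto
  let ?P = "\<Prod>x\<in>F. 1 - c x"
  have "1 - (1 - c x) * ?P \<le> c x + (1 - ?P)" using insert.IH cx
    by (simp add: algebra_simps mult_left_le)
  moreover have "0 \<le> (1 - c x) * ?P" using insert.IH cx by simp
  moreover have "(1 - c x) * ?P \<le> 1" using insert.IH cx by (simp add: mult_le_one)
  ultimately show ?case using insert by simp
qed



lemma head_layer: "f \<in> edges3 m k \<Longrightarrow> fst (snd f) \<ge> 1"
  unfolding edges3_def by auto

lemma desc_iff: "e \<in> desc m k f \<longleftrightarrow> e \<in> edges3 m k \<and> (snd f, fst e) \<in> (edges3 m k)\<^sup>*"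
  unfolding desc_def by auto

lemma sum_bound:
  assumes mk: "2*k \<le> m" and e: "e \<in> edges3 m k"
  shows "(\<Sum>f\<in>edges3 m k. xsol m k f * xsub m k f e) \<le> 3 * xsol m k e"
proof -
  define E where "E = edges3 m k"
  define a where "a = real (m - k choose k)"
  define N where "N = real (m choose k)"
  define c where "c = real (2*k choose k)"
  have apos: "a > 0" unfolding a_def using mk by simp
  have Npos: "N > 0" unfolding N_def using mk by simp
  have cpos: "c > 0" unfolding c_def by simp
  let ?c = "\<lambda>f. xsol m k f * xsub m k f e"
  have finE: "finite E" unfolding E_def by (rule finite_edges3)
  have eE: "e \<in> E" using e E_def by simp
  have split: "(\<Sum>f\<in>E. ?c f) = xsol m k e + (\<Sum>f\<in>E - {e}. ?c f)"
    using sum.remove[OF finE eE, of ?c] by (simp add: xsub_def)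
  have zero: "?c f = 0" if "f \<noteq> e" "(snd f, fst e) \<notin> E\<^sup>*" for f
    using that by (simp add: xsub_def desc_iff E_def)
  have xs0: "xsol m k e \<ge> 0" using xsol01 by blast
  consider (L1) S where "e = ((0, {}), (1, S))" "S \<subseteq> {1..m}" "card S = k"
    | (L2) S T where "e = ((1, S), (2, T))" "S \<subseteq> {1..m}" "card S = k" "T \<subseteq> {1..m}" "card T = 2*k" "S \<subseteq> T"
    | (L3) T U where "e = ((2, T), (3, U))" "T \<subseteq> {1..m}" "card T = 2*k" "U \<subseteq> {1..m}" "card U = k" "U \<subseteq> T"
    using e unfolding edges3_def by blast
  thus ?thesis
  proof cases
    case L1
    have "(\<Sum>f\<in>E - {e}. ?c f) = 0"
    proof (intro sum.neutral ballI)
      fix f assume f: "f \<in> E - {e}"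
      have "(snd f, fst e) \<notin> E\<^sup>*"
      proof
        assume "(snd f, fst e) \<in> E\<^sup>*"
        from reach[OF this[unfolded E_def]] show False
          using head_layer[of f m k] f L1 E_def by auto
      qed
      thus "?c f = 0" using zero f by auto
    qed
    thus ?thesis using split xs0 E_def by simp
  next
    case L2
    define f0 where "f0 = ((0::nat, {}::nat set), (1::nat, S))"
    have f0E: "f0 \<in> E - {e}" using L2 unfolding f0_def E_def edges3_def by auto
    have "(\<Sum>f\<in>E - {e}. ?c f) = (\<Sum>f\<in>{f0}. ?c f)"
    proof (rule sum.mono_neutral_right)
      show "finite (E - {e})" using finE by simp
      show "{f0} \<subseteq> E - {e}" using f0E by simp
      show "\<forall>f\<in>E - {e} - {f0}. ?c f = 0"
      proof
        fix f assume f: "f \<in> E - {e} - {f0}"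
        have "(snd f, fst e) \<notin> E\<^sup>*"
        proof
          assume "(snd f, fst e) \<in> E\<^sup>*"
          from reach[OF this[unfolded E_def]] have "snd f = (1, S)"
            using head_layer[of f m k] f L2 E_def by auto
          moreover have "f \<in> edges3 m k" using f E_def by simp
          ultimately have "f = f0" unfolding f0_def edges3_def by auto
          thus False using f by simp
        qed
        thus "?c f = 0" using zero f by auto
      qed
    qed
    also have "\<dots> = xsol m k e"
    proof -
      have "f0 \<noteq> e" using L2 f0_def by simp
      moreover have "e \<in> desc m k f0" using eE L2 unfolding desc_iff f0_def E_def by simp
      ultimately show ?thesis using L2 unfolding f0_def xsub_def xsol_def elayer_def by simp
    qed
    finally show ?thesis using split xs0 E_def by simp
  next
    case L3
    define P where "P = {S. S \<subseteq> T \<and> card S = k}"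
    define F1 where "F1 = (\<lambda>S. ((0::nat, {}::nat set), (1::nat, S))) ` P"
    define F2 where "F2 = (\<lambda>S. ((1::nat, S), (2::nat, T))) ` P"
    have finT: "finite T" using L3 finite_subset by blast
    have cardP: "card P = 2*k choose k" unfolding P_def using n_subsets[OF finT, of k] L3 by simp
    have F1E: "F1 \<subseteq> E - {e}" using L3 unfolding F1_def P_def E_def edges3_def by auto
    have F2E: "F2 \<subseteq> E - {e}" using L3 unfolding F2_def P_def E_def edges3_def by auto
    have "(\<Sum>f\<in>E - {e}. ?c f) = (\<Sum>f\<in>F1 \<union> F2. ?c f)"
    proof (rule sum.mono_neutral_right)
      show "finite (E - {e})" using finE by simp
      show "F1 \<union> F2 \<subseteq> E - {e}" using F1E F2E by simp
      show "\<forall>f\<in>E - {e} - (F1 \<union> F2). ?c f = 0"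
      proof
        fix f assume f: "f \<in> E - {e} - (F1 \<union> F2)"
        have "(snd f, fst e) \<notin> E\<^sup>*"
        proof
          assume "(snd f, fst e) \<in> E\<^sup>*"
          from reach[OF this[unfolded E_def]] have r: "snd f = (2, T) \<or> (fst (snd f) = 1 \<and> snd (snd f) \<subseteq> T)"
            using head_layer[of f m k] f L3 E_def by auto
          have "f \<in> edges3 m k" using f E_def by simp
          hence "f \<in> F1 \<union> F2" using r unfolding F1_def F2_def P_def edges3_def by auto
          thus False using f by simp
        qed
        thus "?c f = 0" using zero f by auto
      qed
    qed
    also have "\<dots> = (\<Sum>f\<in>F1. ?c f) + (\<Sum>f\<in>F2. ?c f)"
    proof (rule sum.union_disjoint)
      show "finite F1" by (rule finite_subset[OF F1E]) (simp add: finE)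
      show "finite F2" by (rule finite_subset[OF F2E]) (simp add: finE)
      show "F1 \<inter> F2 = {}" unfolding F1_def F2_def by auto
    qed
    also have "(\<Sum>f\<in>F2. ?c f) = 1 / a"
    proof -
      have "(\<Sum>f\<in>F2. ?c f) = (\<Sum>S\<in>P. ?c ((1, S), (2, T)))"
        unfolding F2_def by (rule sum.reindex_cong[OF _ refl refl]) (auto simp: inj_on_def)
      also have "\<dots> = (\<Sum>S\<in>P. 1 / (a * c))"
      proof (intro sum.cong refl)
        fix S assume "S \<in> P"
        hence "((1, S), (2, T)) \<in> F2" "((1::nat, S), (2::nat, T)) \<noteq> e" unfolding F2_def using L3 by auto
        moreover have "e \<in> desc m k ((1, S), (2, T))" using eE L3 unfolding desc_iff E_def by simp
        ultimately show "?c ((1, S), (2, T)) = 1 / (a * c)"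
          using L3 unfolding xsub_def xsol_def elayer_def a_def c_def by simp
      qed
      also have "\<dots> = c / (a * c)" using cardP c_def by simp
      finally show ?thesis using cpos by simp
    qed
    also have "(\<Sum>f\<in>F1. ?c f) = 1 / a"
    proof -
      define n where "n = m - 2*k"
      define g where "g j = 1 / (N * real (n + j choose j))" for j
      have "(\<Sum>f\<in>F1. ?c f) = (\<Sum>S\<in>P. ?c ((0, {}), (1, S)))"
        unfolding F1_def by (rule sum.reindex_cong[OF _ refl refl]) (auto simp: inj_on_def)
      also have "\<dots> = (\<Sum>S\<in>P. g (card (U \<inter> S)))"
      proof (intro sum.cong refl)
        fix S assume SP: "S \<in> P"
        have "((0::nat, {}::nat set), (1::nat, S)) \<noteq> e" using L3 by auto
        moreover have "e \<in> desc m k ((0, {}), (1, S))"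
        proof -
          have "((1, S), (2, T)) \<in> edges3 m k" using F2E SP unfolding F2_def E_def by auto
          thus ?thesis using eE L3 unfolding desc_iff E_def by auto
        qed
        ultimately have "?c ((0, {}), (1, S)) = (1 / a) * ((a / N) / real (n + card (U \<inter> S) choose card (U \<inter> S)))"
          using L3 unfolding xsub_def xsol_def elayer_def eset_def a_def N_def n_def by simp
        also have "\<dots> = g (card (U \<inter> S))" unfolding g_def using apos by simp
        finally show "?c ((0, {}), (1, S)) = g (card (U \<inter> S))" .
      qed
      also have "\<dots> = (\<Sum>j\<le>k. real (card U choose j) * real (card (T - U) choose (k-j)) * g j)"
      proof -
        have "P = {S. S \<subseteq> U \<union> (T - U) \<and> card S = k}" unfolding P_def using L3 by auto
        moreover have "finite U" "finite (T - U)" using finT L3 finite_subset by auto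
        ultimately show ?thesis using count_split[of U "T - U" g k] by auto
      qed
      also have "card (T - U) = k" using L3 finT by (simp add: card_Diff_subset finite_subset)
      also have "(\<Sum>j\<le>k. real (card U choose j) * real (k choose (k-j)) * g j)
          = (\<Sum>j\<le>k. real (k choose j) * real (k choose (k-j)) / real (n+j choose j)) / N"
        unfolding g_def L3(5) by (simp add: sum_divide_distrib mult.commute)
      also have "\<dots> = (real (n+2*k choose k) / real (n+k choose k)) / N"
        by (simp only: choose_sum_real)
      also have "n + 2*k = m" using mk n_def by auto
      also have "n + k = m - k" using mk n_def by auto
      finally show ?thesis using Npos apos unfolding N_def a_def by simp
    qed
    finally have "(\<Sum>f\<in>E - {e}. ?c f) = 2 * xsol m k e"
      using L3 unfolding xsol_def elayer_def a_def by simp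
    thus ?thesis using split xs0 E_def by simp
  qed
qed



theorem lemma4:
  shows "\<exists>\<rho>0>0. \<forall>\<rho>::real. 0 < \<rho> \<and> \<rho> \<le> \<rho>0 \<longrightarrow>
           (\<exists>M::nat. \<forall>m k::nat. m \<ge> M \<and> real k = \<rho> * real m \<longrightarrow>
              (\<forall>e\<in>edges3 m k. xsol m k e \<le> sprob m k e \<and> sprob m k e \<le> 6 * xsol m k e))"
proof (intro exI[of _ "1/2::real"] conjI allI impI)
  fix \<rho> :: real assume r: "0 < \<rho> \<and> \<rho> \<le> 1/2"
  show "\<exists>M::nat. \<forall>m k::nat. m \<ge> M \<and> real k = \<rho> * real m \<longrightarrow>
              (\<forall>e\<in>edges3 m k. xsol m k e \<le> sprob m k e \<and> sprob m k e \<le> 6 * xsol m k e)"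
  proof (intro exI[of _ 0] allI impI ballI)
    fix m k :: nat and e
    assume mk: "0 \<le> m \<and> real k = \<rho> * real m" and e: "e \<in> edges3 m k"
    have "\<rho> * real m \<le> (1/2) * real m" using r by (intro mult_right_mono) auto
    hence "real (2*k) \<le> real m" using mk by simp
    hence mk2: "2*k \<le> m" by linarith
    let ?E = "edges3 m k"
    let ?c = "\<lambda>f. xsol m k f * xsub m k f e"
    have c01: "0 \<le> ?c f \<and> ?c f \<le> 1" for f
      using xsol01[of m k f] xsub01[of m k f e] by (simp add: mult_le_one)
    have compl: "measure_pmf.prob (shadow m k) {A. e \<notin> A} = (\<Prod>f\<in>?E. 1 - ?c f)"
      unfolding shadow_def using shadow_compl[OF finite_edges3, where x="xsol m k" and y="xsub m k" and e=e] e
        xsol01 xsub01 by simp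
    have "measure_pmf.prob (shadow m k) (space (measure_pmf (shadow m k)) - {A. e \<notin> A})
        = 1 - measure_pmf.prob (shadow m k) {A. e \<notin> A}"
      by (rule measure_pmf.prob_compl) simp
    moreover have "space (measure_pmf (shadow m k)) - {A. e \<notin> A} = {A. e \<in> A}" by auto
    ultimately have sp: "sprob m k e = 1 - (\<Prod>f\<in>?E. 1 - ?c f)"
      unfolding sprob_def using compl by simp
    have fin: "finite ?E" by (rule finite_edges3)
    have ce: "?c e = xsol m k e" by (simp add: xsub_def)
    have "(\<Prod>f\<in>?E. 1 - ?c f) = (1 - ?c e) * (\<Prod>f\<in>?E - {e}. 1 - ?c f)"
      using prod.remove[OF fin e] by simp
    moreover have "0 \<le> (\<Prod>f\<in>?E - {e}. 1 - ?c f) \<and> (\<Prod>f\<in>?E - {e}. 1 - ?c f) \<le> 1"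
      using one_minus_prod_le[of "?E - {e}" ?c] fin c01 by auto
    moreover have "0 \<le> 1 - ?c e" using c01 by simp
    ultimately have "(\<Prod>f\<in>?E. 1 - ?c f) \<le> 1 - ?c e"
      by (simp add: mult_left_le)
    hence low: "xsol m k e \<le> sprob m k e" using sp ce by simp
    have "sprob m k e \<le> (\<Sum>f\<in>?E. ?c f)" using sp one_minus_prod_le[OF fin c01] by simp
    also have "\<dots> \<le> 3 * xsol m k e" by (rule sum_bound[OF mk2 e])
    also have "\<dots> \<le> 6 * xsol m k e" using xsol01[of m k e] by simp
    finally show "xsol m k e \<le> sprob m k e \<and> sprob m k e \<le> 6 * xsol m k e" using low by simp
  qed
qed simp


end
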